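(* $\mathrm{Isom}_{\mathbb Z}(L)/W^+\cong \mathbb Z_2\times D$, where $D$ is the dihedral group of order $12$.
   Context: $\mathbb F$ is a field of characteristic zero, $\mathfrak{sl}_2$ the Lie algebra of $2\times2$ trace-zero matrices over $\mathbb F$ with trace form $(u,v)=\mathrm{tr}(uv)$. Equitable basis: $x=\begin{pmatrix}1&0\\0&-1\end{pmatrix}$, $y=\begin{pmatrix}-1&2\\0&1\end{pmatrix}$, $z=\begin{pmatrix}-1&0\\-2&1\end{pmatrix}$, $L=\mathbb Zx\oplus\mathbb Zy\oplus\mathbb Zz$. $\mathrm{Isom}_{\mathbb Z}(L)$ is the group of trace-form isometries $\varphi$ ($\mathbb F$-linear bijections preserving $(\,,\,)$) of $\mathfrak{sl}_2$ with $\varphi(L)=L$. For $u\in\{x,y,z\}$, $r_u(v)=v-(u,v)u$; $W=\langle r_x,r_y,r_z\rangle$, and $W^+$ is the subgroup of elements of $W$ of even length with respect to the generators $r_x,r_y,r_z$ (a normal subgroup of $\mathrm{Isom}_{\mathbb Z}(L)$). *)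

theory Defs
  imports "HOL-Analysis.Finite_Cartesian_Product" "HOL-Algebra.Elementary_Groups"
    "HOL-Algebra.Generated_Groups" "HOL-Algebra.Coset"
begin

type_synonym 'a mat2 = "'a ^ 2 ^ 2"

definition mat2 :: "'a \<Rightarrow> 'a \<Rightarrow> 'a \<Rightarrow> 'a \<Rightarrow> 'a mat2" where
  "mat2 a b c d = (\<chi> i j. if i = 1 then (if j = 1 then a else b) else (if j = 1 then c else d))"

definition mmul :: "'a::comm_ring_1 mat2 \<Rightarrow> 'a mat2 \<Rightarrow> 'a mat2" where
  "mmul A B = (\<chi> i j. \<Sum>k\<in>UNIV. A $ i $ k * B $ k $ j)"

definition smul :: "'a::comm_ring_1 \<Rightarrow> 'a mat2 \<Rightarrow> 'a mat2" where
  "smul c A = (\<chi> i j. c * A $ i $ j)"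

definition mtrace :: "'a::comm_ring_1 mat2 \<Rightarrow> 'a" where
  "mtrace A = A $ 1 $ 1 + A $ 2 $ 2"

definition tform :: "'a::comm_ring_1 mat2 \<Rightarrow> 'a mat2 \<Rightarrow> 'a" where
  "tform u v = mtrace (mmul u v)"

definition sl2 :: "'a::comm_ring_1 mat2 set" where
  "sl2 = {A. mtrace A = 0}"

definition ex :: "'a::comm_ring_1 mat2" where "ex = mat2 1 0 0 (-1)"
definition ey :: "'a::comm_ring_1 mat2" where "ey = mat2 (-1) 2 0 1"
definition ez :: "'a::comm_ring_1 mat2" where "ez = mat2 (-1) 0 (-2) 1"

definition Lat :: "'a::comm_ring_1 mat2 set" where
  "Lat = {smul (of_int a) ex + smul (of_int b) ey + smul (of_int c) ez | a b c. True}"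

text \<open>Maps of sl_2 are represented extensionally (undefined outside sl_2), composed with compose.\<close>
definition IsomZ :: "('a::field_char_0 mat2 \<Rightarrow> 'a mat2) set" where
  "IsomZ = {\<phi>. \<phi> \<in> extensional sl2 \<and> bij_betw \<phi> sl2 sl2
     \<and> (\<forall>u\<in>sl2. \<forall>v\<in>sl2. \<phi> (u + v) = \<phi> u + \<phi> v)
     \<and> (\<forall>c. \<forall>u\<in>sl2. \<phi> (smul c u) = smul c (\<phi> u))
     \<and> (\<forall>u\<in>sl2. \<forall>v\<in>sl2. tform (\<phi> u) (\<phi> v) = tform u v)
     \<and> \<phi> ` Lat = Lat}"

definition Isom_group :: "('a::field_char_0 mat2 \<Rightarrow> 'a mat2) monoid" where
  "Isom_group = \<lparr>carrier = IsomZ, mult = (\<lambda>\<phi> \<psi>. compose sl2 \<phi> \<psi>), one = restrict id sl2\<rparr>"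

definition reflU :: "'a::field_char_0 mat2 \<Rightarrow> ('a mat2 \<Rightarrow> 'a mat2)" where
  "reflU u = restrict (\<lambda>v. v - smul (tform u v) u) sl2"

definition refl_gens :: "('a::field_char_0 mat2 \<Rightarrow> 'a mat2) set" where
  "refl_gens = {reflU ex, reflU ey, reflU ez}"

definition word_length :: "('g, 'b) monoid_scheme \<Rightarrow> 'g set \<Rightarrow> 'g \<Rightarrow> nat" where
  "word_length G S g = (LEAST n. \<exists>ws. length ws = n \<and> set ws \<subseteq> S \<and> foldr (\<otimes>\<^bsub>G\<^esub>) ws \<one>\<^bsub>G\<^esub> = g)"

definition Wgrp :: "('a::field_char_0 mat2 \<Rightarrow> 'a mat2) set" where
  "Wgrp = generate Isom_group refl_gens"

definition Wplus :: "('a::field_char_0 mat2 \<Rightarrow> 'a mat2) set" where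
  "Wplus = {g \<in> Wgrp. even (word_length Isom_group refl_gens g)}"

text \<open>(a,s) stands for r^a f^s, with f r f = r^{-1}.\<close>
definition dihedral_group :: "nat \<Rightarrow> (int \<times> bool) monoid" where
  "dihedral_group n = \<lparr>carrier = {0..<int n} \<times> UNIV,
     mult = (\<lambda>(a, s) (b, t). ((a + (if s then - b else b)) mod int n, s \<noteq> t)),
     one = (0, False)\<rparr>"

end

theory Submission
  imports Defs
begin

lemma ex2: fixes x :: 2 shows "x = 1 \<or> x = 2"
proof (induct x)
  case (of_int z)
  then have "z = 0 | z = 1" by fastforce
  then show ?case by auto
qed

lemma UNIV2: "(UNIV::2 set) = {1,2}" using ex2 by auto
lemma sum2: "sum f (UNIV::2 set) = f 1 + f 2" unfolding UNIV2 by simp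

lemma mat2_nth[simp]: "mat2 a b c d $ 1 $ 1 = a" "mat2 a b c d $ 1 $ 2 = b"
  "mat2 a b c d $ 2 $ 1 = c" "mat2 a b c d $ 2 $ 2 = d"
  by (simp_all add: mat2_def)

lemma mat2_eq: "(A::'a mat2) = mat2 (A$1$1) (A$1$2) (A$2$1) (A$2$2)"
  unfolding mat2_def by (simp add: vec_eq_iff) (metis ex2)

lemma mat2_eq_iff: "mat2 a b c d = mat2 a' b' c' d' \<longleftrightarrow> a = a' \<and> b = b' \<and> c = c' \<and> d = d'"
  by (metis mat2_nth)

lemma mat2_add: "mat2 a b c d + mat2 a' b' c' d' = mat2 (a+a') (b+b') (c+c') (d+d')"
  by (subst mat2_eq) simp

lemma mat2_smul: "smul k (mat2 a b c d) = mat2 (k*a) (k*b) (k*c) (k*d)"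
  by (subst mat2_eq) (simp add: smul_def)

lemma mat2_mmul: "mmul (mat2 a b c d) (mat2 a' b' c' d') =
   mat2 (a*a'+b*c') (a*b'+b*d') (c*a'+d*c') (c*b'+d*d')"
  by (subst mat2_eq) (simp add: mmul_def sum2)

lemma mat2_tform: "tform (mat2 a b c d) (mat2 a' b' c' d') = a*a'+b*c'+ c*b'+d*d'"
  by (simp add: tform_def mat2_mmul mtrace_def)

definition vec3 :: "'a::comm_ring_1 \<times> 'a \<times> 'a \<Rightarrow> 'a mat2" where
  "vec3 v = (case v of (a,b,c) \<Rightarrow> mat2 (a-b-c) (2*b) (-2*c) (-a+b+c))"

definition crd :: "'a::field mat2 \<Rightarrow> 'a \<times> 'a \<times> 'a" where
  "crd A = (A$1$1 + A$1$2/2 - A$2$1/2, A$1$2/2, -(A$2$1/2))"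

fun add3 :: "'a::comm_ring_1 \<times> 'a \<times> 'a \<Rightarrow> 'a \<times> 'a \<times> 'a \<Rightarrow> 'a \<times> 'a \<times> 'a" where
  "add3 (a,b,c) (a',b',c') = (a+a',b+b',c+c')"
fun scl3 :: "'a::comm_ring_1 \<Rightarrow> 'a \<times> 'a \<times> 'a \<Rightarrow> 'a \<times> 'a \<times> 'a" where
  "scl3 k (a,b,c) = (k*a,k*b,k*c)"
fun oi3 :: "int \<times> int \<times> int \<Rightarrow> 'a::comm_ring_1 \<times> 'a \<times> 'a" where
  "oi3 (a,b,c) = (of_int a, of_int b, of_int c)"
fun Bf :: "'a::comm_ring_1 \<times> 'a \<times> 'a \<Rightarrow> 'a \<times> 'a \<times> 'a \<Rightarrow> 'a" where
  "Bf (a,b,c) (a',b',c') = a*a'+b*b'+c*c' - a*b' - b*a' - a*c' - c*a' - b*c' - c*b'"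

lemma vec3_sl2[simp]: "vec3 v \<in> sl2"
  by (cases v) (simp add: vec3_def sl2_def mtrace_def)

lemma crd_vec3[simp]: "crd (vec3 v) = (v :: 'a::field_char_0 \<times> 'a \<times> 'a)"
  by (cases v) (simp add: vec3_def crd_def)

lemma vec3_crd: "A \<in> sl2 \<Longrightarrow> vec3 (crd A) = (A :: 'a::field_char_0 mat2)"
  apply (subst (2) mat2_eq)
  apply (simp add: vec3_def crd_def mat2_eq_iff sl2_def mtrace_def field_simps)
  apply (subgoal_tac "A $ 2 $ 2 = - A $ 1 $ 1")
   apply (metis mat2_eq)
  by (simp add: eq_neg_iff_add_eq_0 add.commute)

lemma vec3_inj: "vec3 u = vec3 v \<longleftrightarrow> u = (v :: 'a::field_char_0 \<times> 'a \<times> 'a)"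
  by (metis crd_vec3)

lemma vec3_add: "vec3 u + vec3 v = vec3 (add3 u v)"
  by (cases u; cases v) (simp add: vec3_def mat2_add algebra_simps)

lemma vec3_smul: "smul k (vec3 v) = vec3 (scl3 k v)"
  by (cases v) (simp add: vec3_def mat2_smul algebra_simps)

lemma tform_vec3: "tform (vec3 u) (vec3 v) = 2 * Bf u v"
  by (cases u; cases v) (simp add: vec3_def mat2_tform algebra_simps)

lemma ex_vec3: "ex = vec3 (1,0,0)" "ey = vec3 (0,1,0)" "ez = vec3 (0,0,1)"
  by (simp_all add: ex_def ey_def ez_def vec3_def)

lemma oi3_inj: "(oi3 u :: 'a::field_char_0 \<times> 'a \<times> 'a) = oi3 v \<longleftrightarrow> u = v"
  by (cases u; cases v) auto

lemma Lat_vec3: "Lat = vec3 ` range oi3"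
proof -
  have *: "smul (of_int a) ex + smul (of_int b) ey + smul (of_int c) ez = vec3 (oi3 (a,b,c))" for a b c
    by (simp add: ex_vec3 vec3_smul vec3_add)
  show ?thesis unfolding Lat_def
  proof (rule Set.set_eqI, rule iffI)
    fix A assume "A \<in> {smul (of_int a) ex + smul (of_int b) ey + smul (of_int c) ez |a b c. True}"
    then obtain a b c where "A = smul (of_int a) ex + smul (of_int b) ey + smul (of_int c) ez" by blast
    then have "A = vec3 (oi3 (a,b,c))" using * by simp
    then show "A \<in> vec3 ` range oi3" by blast
  next
    fix A assume "A \<in> vec3 ` range oi3"
    then obtain t where t: "A = vec3 (oi3 t)" by blast
    obtain a b c where "t = (a,b,c)" by (cases t)
    then have "A = vec3 (oi3 (a,b,c))" using t by simp
    then have "A = smul (of_int a) ex + smul (of_int b) ey + smul (of_int c) ez" by (simp only: *)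
    then show "A \<in> {smul (of_int a) ex + smul (of_int b) ey + smul (of_int c) ez |a b c. True}"
      by blast
  qed
qed

lemma Lat_sl2: "Lat \<subseteq> sl2" by (auto simp: Lat_vec3)



lemma sl2_add: "u \<in> sl2 \<Longrightarrow> v \<in> sl2 \<Longrightarrow> u + v \<in> sl2"
proof -
  assume "u \<in> sl2" "v \<in> sl2"
  then have "u$1$1 + u$2$2 = 0" "v$1$1 + v$2$2 = 0" by (auto simp: sl2_def mtrace_def)
  moreover have "(u+v)$1$1 + (u+v)$2$2 = (u$1$1 + u$2$2) + (v$1$1 + v$2$2)" by (simp add: algebra_simps)
  ultimately show ?thesis by (simp add: sl2_def mtrace_def)
qed
lemma sl2_smul: "u \<in> sl2 \<Longrightarrow> smul c u \<in> sl2"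
  by (simp add: sl2_def mtrace_def smul_def distrib_left[symmetric])

lemma crd_add: "crd (A + B) = add3 (crd A) (crd (B::'a::field_char_0 mat2))"
  by (simp add: crd_def field_simps)
lemma crd_smul: "crd (smul c A) = scl3 c (crd (A::'a::field_char_0 mat2))"
  by (simp add: crd_def smul_def field_simps)

lemma Bf_oi3: "Bf (oi3 u) (oi3 v) = (of_int (Bf u v) :: 'a::comm_ring_1)"
  by (cases u; cases v) simp

datatype m3 = M3 int int int int int int int int int

fun app :: "m3 \<Rightarrow> 'a::comm_ring_1 \<times> 'a \<times> 'a \<Rightarrow> 'a \<times> 'a \<times> 'a" where
  "app (M3 a b c d e f g h i) (x,y,z) = (of_int a*x + of_int b*y + of_int c*z,
     of_int d*x+of_int e*y+of_int f*z, of_int g*x+of_int h*y+of_int i*z)"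

fun mm :: "m3 \<Rightarrow> m3 \<Rightarrow> m3" where
 "mm (M3 a b c d e f g h i) (M3 a' b' c' d' e' f' g' h' i') =
   M3 (a*a'+b*d'+c*g') (a*b'+b*e'+c*h') (a*c'+b*f'+c*i')
      (d*a'+e*d'+f*g') (d*b'+e*e'+f*h') (d*c'+e*f'+f*i')
      (g*a'+h*d'+i*g') (g*b'+h*e'+i*h') (g*c'+h*f'+i*i')"

definition I3 :: m3 where "I3 = M3 1 0 0 0 1 0 0 0 1"

lemma app_mm: "app (mm M N) v = app M (app N v)"
  by (cases M; cases N; cases v) (simp add: algebra_simps)
lemma app_I3[simp]: "app I3 v = v"
  by (cases v) (simp add: I3_def)
lemma mm_I3[simp]: "mm I3 M = M" "mm M I3 = M"
  by (cases M; simp add: I3_def)+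
lemma mm_assoc: "mm (mm A B) C = mm A (mm B C)"
  by (cases A; cases B; cases C) (simp add: algebra_simps)
lemma app_add3: "app M (add3 u v) = add3 (app M u) (app M v)"
  by (cases M; cases u; cases v) (simp add: algebra_simps)
lemma app_scl3: "app M (scl3 k v) = scl3 k (app M v)"
  by (cases M; cases v) (simp add: algebra_simps)
lemma app_oi3: "app M (oi3 v) = (oi3 (app M v) :: 'a::comm_ring_1 \<times> 'a \<times> 'a)"
  by (cases M; cases v) simp

lemma app_int_eq: "(app M v :: int \<times> int \<times> int) = (case M of M3 a b c d e f g h i \<Rightarrow> case v of (x,y,z) \<Rightarrow>
   (a*x+b*y+c*z, d*x+e*y+f*z, g*x+h*y+i*z))"
  by (cases M; cases v) simp

definition isoB :: "m3 \<Rightarrow> bool" where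
  "isoB M \<longleftrightarrow> (\<forall>u v :: int \<times> int \<times> int. Bf (app M u) (app M v) = Bf u v)"

lemma Bf_expand: "Bf (app M (x::'a::comm_ring_1,y,z)) (app M (x',y',z')) =
   x*x'*of_int (Bf (app M (1,0,0)) (app M (1,0,0)::int\<times>int\<times>int)) +
   x*y'*of_int (Bf (app M (1,0,0)) (app M (0,1,0)::int\<times>int\<times>int)) +
   x*z'*of_int (Bf (app M (1,0,0)) (app M (0,0,1)::int\<times>int\<times>int)) +
   y*x'*of_int (Bf (app M (0,1,0)) (app M (1,0,0)::int\<times>int\<times>int)) +
   y*y'*of_int (Bf (app M (0,1,0)) (app M (0,1,0)::int\<times>int\<times>int)) +
   y*z'*of_int (Bf (app M (0,1,0)) (app M (0,0,1)::int\<times>int\<times>int)) +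
   z*x'*of_int (Bf (app M (0,0,1)) (app M (1,0,0)::int\<times>int\<times>int)) +
   z*y'*of_int (Bf (app M (0,0,1)) (app M (0,1,0)::int\<times>int\<times>int)) +
   z*z'*of_int (Bf (app M (0,0,1)) (app M (0,0,1)::int\<times>int\<times>int)) "
  by (cases M) (simp add: algebra_simps)

lemma isoB_F: assumes "isoB M" shows "Bf (app M u) (app M v) = (Bf u v :: 'a::comm_ring_1)"
proof -
  obtain x y z where u: "u = (x,y,z)" by (cases u)
  obtain x' y' z' where v: "v = (x',y',z')" by (cases v)
  have "Bf (app M u) (app M v) = Bf (app I3 u) (app I3 (v::'a\<times>'a\<times>'a))"
    unfolding u v
    apply (subst Bf_expand[of M x y z x' y' z'])
    apply (subst Bf_expand[of I3 x y z x' y' z'])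
    using assms unfolding isoB_def by (simp only: app_I3)
  then show ?thesis by simp
qed

definition lin :: "m3 \<Rightarrow> 'a::field_char_0 mat2 \<Rightarrow> 'a mat2" where
  "lin M = restrict (\<lambda>A. vec3 (app M (crd A))) sl2"

lemma lin_vec3[simp]: "lin M (vec3 v) = vec3 (app M v)"
  by (simp add: lin_def)

lemma lin_comp: "compose sl2 (lin M) (lin N) = (lin (mm M N) :: 'a::field_char_0 mat2 \<Rightarrow> _)"
  unfolding lin_def compose_def by (rule restrict_ext) (simp add: app_mm)

lemma lin_in:
  assumes "isoB M" "mm M N = I3" "mm N M = I3"
  shows "(lin M :: 'a::field_char_0 mat2 \<Rightarrow> _) \<in> IsomZ"
proof -
  have inv: "lin N' (lin M' A) = A" if "A \<in> sl2" "mm N' M' = I3" for A :: "'a mat2" and M' N'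
    using that by (simp add: lin_def app_mm[symmetric] vec3_crd)
  have bij: "bij_betw (lin M :: 'a mat2 \<Rightarrow> _) sl2 sl2"
    apply (rule bij_betw_byWitness[where f'="lin N"])
    using assms inv by (auto simp: lin_def)
  have add: "lin M (u + v) = lin M u + lin M (v :: 'a mat2)" if "u \<in> sl2" "v \<in> sl2" for u v
    using that by (simp add: lin_def sl2_add crd_add app_add3 vec3_add)
  have sm: "lin M (smul c u) = smul c (lin M (u::'a mat2))" if "u \<in> sl2" for u c
    using that by (simp add: lin_def sl2_smul crd_smul app_scl3 vec3_smul)
  have tf: "tform (lin M u) (lin M v) = tform u (v::'a mat2)" if "u \<in> sl2" "v \<in> sl2" for u v
  proof -
    have "tform (lin M u) (lin M v) = tform (vec3 (app M (crd u))) (vec3 (app M (crd v)))"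
      using that by (simp add: lin_def)
    also have "\<dots> = tform (vec3 (crd u)) (vec3 (crd v))"
      by (simp add: tform_vec3 isoB_F[OF assms(1)])
    finally show ?thesis using that by (simp add: vec3_crd)
  qed
  have lat: "lin M ` Lat = (Lat :: 'a mat2 set)"
  proof
    show "lin M ` Lat \<subseteq> (Lat :: 'a mat2 set)"
    proof
      fix B :: "'a mat2" assume "B \<in> lin M ` Lat"
      then obtain t where "B = lin M (vec3 (oi3 t))" by (auto simp: Lat_vec3 simp del: oi3.simps)
      then have "B = vec3 (oi3 (app M t))" by (simp only: lin_vec3 app_oi3)
      then show "B \<in> Lat" by (simp add: Lat_vec3 del: oi3.simps)
    qed
    show "(Lat :: 'a mat2 set) \<subseteq> lin M ` Lat"
    proof
      fix A :: "'a mat2" assume "A \<in> Lat"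
      then obtain t where t: "A = vec3 (oi3 t)" by (auto simp: Lat_vec3)
      have "A = lin M (vec3 (oi3 (app N t)))"
        by (simp add: t app_oi3 app_mm[symmetric] assms del: oi3.simps)
      moreover have "vec3 (oi3 (app N t)) \<in> (Lat :: 'a mat2 set)" by (simp add: Lat_vec3 del: oi3.simps)
      ultimately show "A \<in> lin M ` Lat" by blast
    qed
  qed
  have ext: "(lin M :: 'a mat2 \<Rightarrow> _) \<in> extensional sl2" by (simp add: lin_def)
  have c3: "\<forall>u\<in>sl2. \<forall>v\<in>sl2. lin M (u+v) = lin M u + lin M (v::'a mat2)" using add by blast
  have c4: "\<forall>c. \<forall>u\<in>sl2. lin M (smul c u) = smul c (lin M (u::'a mat2))" using sm by blast
  have c5: "\<forall>u\<in>sl2. \<forall>v\<in>sl2. tform (lin M u) (lin M v) = tform u (v::'a mat2)" using tf by blast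
  show ?thesis unfolding IsomZ_def mem_Collect_eq
    using local.ext bij c3 c4 c5 lat by (intro conjI)
qed



lemma IsomZ_D:
  assumes "\<phi> \<in> IsomZ"
  shows "\<phi> \<in> extensional sl2" "bij_betw \<phi> sl2 sl2"
    "\<And>u v. u \<in> sl2 \<Longrightarrow> v \<in> sl2 \<Longrightarrow> \<phi> (u + v) = \<phi> u + \<phi> v"
    "\<And>c u. u \<in> sl2 \<Longrightarrow> \<phi> (smul c u) = smul c (\<phi> u)"
    "\<And>u v. u \<in> sl2 \<Longrightarrow> v \<in> sl2 \<Longrightarrow> tform (\<phi> u) (\<phi> v) = tform u v"
    "\<phi> ` Lat = Lat"
  using assms unfolding IsomZ_def by blast+

lemma IsomZ_sl2: "\<phi> \<in> IsomZ \<Longrightarrow> u \<in> sl2 \<Longrightarrow> \<phi> u \<in> sl2"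
  by (rule bij_betw_apply[OF IsomZ_D(2)])

lemma IsomZ_intro:
  assumes "\<phi> \<in> extensional sl2" "bij_betw \<phi> sl2 sl2"
    "\<And>u v. u \<in> sl2 \<Longrightarrow> v \<in> sl2 \<Longrightarrow> \<phi> (u + v) = \<phi> u + \<phi> v"
    "\<And>c u. u \<in> sl2 \<Longrightarrow> \<phi> (smul c u) = smul c (\<phi> u)"
    "\<And>u v. u \<in> sl2 \<Longrightarrow> v \<in> sl2 \<Longrightarrow> tform (\<phi> u) (\<phi> v) = tform u v"
    "\<phi> ` Lat = Lat"
  shows "\<phi> \<in> IsomZ"
  unfolding IsomZ_def mem_Collect_eq
  by (intro conjI ballI allI assms; assumption)

lemma comp_IsomZ:
  assumes "\<phi> \<in> IsomZ" "\<psi> \<in> IsomZ"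
  shows "compose sl2 \<phi> \<psi> \<in> IsomZ"
proof (rule IsomZ_intro)
  note p = IsomZ_D[OF assms(1)] and q = IsomZ_D[OF assms(2)]
  note s = IsomZ_sl2[OF assms(2)]
  show "compose sl2 \<phi> \<psi> \<in> extensional sl2" by simp
  show "bij_betw (compose sl2 \<phi> \<psi>) sl2 sl2" by (rule bij_betw_compose[OF q(2) p(2)])
  show "compose sl2 \<phi> \<psi> (u + v) = compose sl2 \<phi> \<psi> u + compose sl2 \<phi> \<psi> v"
    if "u \<in> sl2" "v \<in> sl2" for u v
    using that by (simp add: compose_eq sl2_add q(3) p(3) s)
  show "compose sl2 \<phi> \<psi> (smul c u) = smul c (compose sl2 \<phi> \<psi> u)" if "u \<in> sl2" for c u
    using that by (simp add: compose_eq sl2_smul q(4) p(4) s)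
  show "tform (compose sl2 \<phi> \<psi> u) (compose sl2 \<phi> \<psi> v) = tform u v" if "u \<in> sl2" "v \<in> sl2" for u v
    using that by (simp add: compose_eq q(5) p(5) s)
  have "compose sl2 \<phi> \<psi> ` Lat = (\<phi> \<circ> \<psi>) ` Lat"
    by (rule image_cong) (use Lat_sl2 in \<open>auto simp: compose_eq\<close>)
  also have "\<dots> = \<phi> ` (\<psi> ` Lat)" by (rule image_comp[symmetric])
  finally have "compose sl2 \<phi> \<psi> ` Lat = \<phi> ` (\<psi> ` Lat)" .
  then show "compose sl2 \<phi> \<psi> ` Lat = Lat" using p(6) q(6) by simp
qed

lemma id_IsomZ: "restrict id sl2 \<in> IsomZ"
  by (rule IsomZ_intro) (auto simp: sl2_add sl2_smul Lat_sl2 bij_betw_def inj_on_def image_iff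
      intro: rev_image_eqI dest: subsetD[OF Lat_sl2])

lemma inv_IsomZ:
  fixes \<phi> :: "'a::field_char_0 mat2 \<Rightarrow> 'a mat2"
  assumes "\<phi> \<in> IsomZ"
  defines "\<psi> \<equiv> restrict (inv_into sl2 \<phi>) sl2"
  shows "\<psi> \<in> IsomZ" "compose sl2 \<psi> \<phi> = restrict id sl2"
proof -
  note p = IsomZ_D[OF assms(1)]
  have inj: "inj_on \<phi> sl2" and sur: "\<phi> ` sl2 = sl2" using p(2) by (auto simp: bij_betw_def)
  have lf: "\<psi> (\<phi> a) = a" if "a \<in> sl2" for a
    using that inj sur by (auto simp: \<psi>_def)
  have ex: "\<exists>a\<in>sl2. u = \<phi> a" if "u \<in> sl2" for u using that sur by auto
  have ps: "\<psi> u \<in> sl2" if "u \<in> sl2" for u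
    using ex[OF \<open>u \<in> sl2\<close>] lf by auto
  show "\<psi> \<in> IsomZ"
  proof (rule IsomZ_intro)
    show "\<psi> \<in> extensional sl2" by (simp add: \<psi>_def)
    have "bij_betw (inv_into sl2 \<phi>) sl2 sl2" using bij_betw_inv_into[OF p(2)] .
    then show "bij_betw \<psi> sl2 sl2" by (rule bij_betw_cong[THEN iffD1, rotated]) (simp add: \<psi>_def)
    show "\<psi> (u + v) = \<psi> u + \<psi> v" if "u \<in> sl2" "v \<in> sl2" for u v
    proof -
      obtain a where a: "a \<in> sl2" "u = \<phi> a" using ex[OF \<open>u \<in> sl2\<close>] by blast
      obtain b where b: "b \<in> sl2" "v = \<phi> b" using ex[OF \<open>v \<in> sl2\<close>] by blast
      note ab = a(1) b(1) a(2) b(2)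
      then have "u + v = \<phi> (a + b)" using p(3) by simp
      then show ?thesis using ab lf[of "a+b"] lf[of a] lf[of b] sl2_add[of a b] by simp
    qed
    show "\<psi> (smul c u) = smul c (\<psi> u)" if "u \<in> sl2" for c u
    proof -
      obtain a where ab: "a \<in> sl2" "u = \<phi> a" using ex[OF \<open>u \<in> sl2\<close>] by blast
      then have "smul c u = \<phi> (smul c a)" using p(4) by simp
      then show ?thesis using ab lf[of "smul c a"] lf[of a] sl2_smul[of a c] by simp
    qed
    show "tform (\<psi> u) (\<psi> v) = tform u v" if "u \<in> sl2" "v \<in> sl2" for u v
    proof -
      obtain a where a: "a \<in> sl2" "u = \<phi> a" using ex[OF \<open>u \<in> sl2\<close>] by blast
      obtain b where b: "b \<in> sl2" "v = \<phi> b" using ex[OF \<open>v \<in> sl2\<close>] by blast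
      note ab = a(1) b(1) a(2) b(2)
      then show ?thesis using lf p(5) by simp
    qed
    show "\<psi> ` Lat = Lat"
    proof
      show "\<psi> ` Lat \<subseteq> Lat"
      proof
        fix w :: "'a mat2" assume "w \<in> \<psi> ` Lat"
        then obtain l where l: "l \<in> Lat" "w = \<psi> l" by blast
        then obtain l' where "l' \<in> Lat" "l = \<phi> l'" using p(6) by blast
        then show "w \<in> Lat" using l lf Lat_sl2 by auto
      qed
      show "Lat \<subseteq> \<psi> ` Lat"
      proof
        fix l :: "'a mat2" assume l: "l \<in> Lat"
        then have "\<phi> l \<in> Lat" "\<psi> (\<phi> l) = l" using p(6) lf Lat_sl2 by auto
        then show "l \<in> \<psi> ` Lat" by (metis imageI)
      qed
    qed
  qed
  show "compose sl2 \<psi> \<phi> = restrict id sl2"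
    unfolding compose_def by (rule restrict_ext) (simp add: lf)
qed

lemma group_Isom: "group (Isom_group :: ('a::field_char_0 mat2 \<Rightarrow> 'a mat2) monoid)"
proof (rule groupI)
  show "x \<otimes>\<^bsub>Isom_group\<^esub> y \<in> carrier Isom_group" if "x \<in> carrier Isom_group" "y \<in> carrier Isom_group"
    for x y :: "'a mat2 \<Rightarrow> 'a mat2"
    using that comp_IsomZ by (simp add: Isom_group_def)
  show "\<one>\<^bsub>Isom_group\<^esub> \<in> carrier (Isom_group :: ('a mat2 \<Rightarrow> 'a mat2) monoid)"
    using id_IsomZ by (simp add: Isom_group_def)
  show "x \<otimes>\<^bsub>Isom_group\<^esub> y \<otimes>\<^bsub>Isom_group\<^esub> z = x \<otimes>\<^bsub>Isom_group\<^esub> (y \<otimes>\<^bsub>Isom_group\<^esub> z)"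
    if "x \<in> carrier Isom_group" "y \<in> carrier Isom_group" "z \<in> carrier Isom_group"
    for x y z :: "'a mat2 \<Rightarrow> 'a mat2"
  proof -
    have "z \<in> sl2 \<rightarrow> sl2" using that IsomZ_sl2 by (auto simp: Isom_group_def)
    then show ?thesis by (simp add: Isom_group_def compose_assoc)
  qed
  show "\<one>\<^bsub>Isom_group\<^esub> \<otimes>\<^bsub>Isom_group\<^esub> x = x" if "x \<in> carrier Isom_group" for x :: "'a mat2 \<Rightarrow> 'a mat2"
  proof -
    have "x \<in> IsomZ" using that by (simp add: Isom_group_def)
    then show ?thesis
      by (simp add: Isom_group_def) (rule extensionalityI[OF compose_extensional IsomZ_D(1)];
          simp add: compose_eq IsomZ_sl2)
  qed
  show "\<exists>y\<in>carrier Isom_group. y \<otimes>\<^bsub>Isom_group\<^esub> x = \<one>\<^bsub>Isom_group\<^esub>"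
    if "x \<in> carrier Isom_group" for x :: "'a mat2 \<Rightarrow> 'a mat2"
    using inv_IsomZ[of x] that by (auto simp: Isom_group_def)
qed


definition R0 :: m3 where "R0 = M3 (-1) 2 2 0 1 0 0 0 1"
definition R1 :: m3 where "R1 = M3 1 0 0 2 (-1) 2 0 0 1"
definition R2 :: m3 where "R2 = M3 1 0 0 0 1 0 2 2 (-1)"
definition Rm :: "nat \<Rightarrow> m3" where "Rm i = (if i mod 3 = 0 then R0 else if i mod 3 = 1 then R1 else R2)"

fun Rw :: "nat list \<Rightarrow> m3" where
  "Rw [] = I3"
| "Rw (i # ws) = mm (Rm i) (Rw ws)"

lemma Rw_append: "Rw (xs @ ys) = mm (Rw xs) (Rw ys)"
  by (induction xs) (simp_all add: mm_assoc)

fun s3 :: "int \<times> int \<times> int \<Rightarrow> int" where "s3 (a,b,c) = a + b + c"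

lemma app_R0: "app R0 (a,b,c) = (-a+2*b+2*c, b, (c::int))" by (simp add: R0_def)
lemma app_R1: "app R1 (a,b,c) = (a, 2*a-b+2*c, (c::int))" by (simp add: R1_def)
lemma app_R2: "app R2 (a,b,c) = (a, b, 2*a+2*b-(c::int))" by (simp add: R2_def)

lemma core:
  fixes p q r :: int
  assumes "p < 0" "p + q + r > 0" "p*q + q*r + p*r = 3"
  shows "3*p + q + r > 0"
proof -
  define a where "a = -p"
  have a: "a > 0" using assms(1) by (simp add: a_def)
  have e: "(q - a) * (r - a) = 3 + a*a" using assms(3) by (simp add: a_def algebra_simps)
  have qr: "q + r > a" using assms(2) by (simp add: a_def)
  have pos: "q - a > 0 \<and> r - a > 0"
  proof (rule ccontr)
    assume "\<not> ?thesis"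
    then have "q - a \<le> 0 \<or> r - a \<le> 0" by auto
    moreover have "(q - a) * (r - a) > 0" using e a by (simp add: add_pos_nonneg)
    ultimately have n: "q - a < 0 \<and> r - a < 0"
      by (metis mult_nonneg_nonpos2 mult_nonpos_nonneg not_le order.strict_iff_order zero_less_mult_iff)
    define P where "P = a - q"
    define Q where "Q = a - r"
    have "P > 0" "Q > 0" "P * Q = 3 + a*a" "P + Q < a"
      using n e qr by (auto simp: P_def Q_def algebra_simps)
    then have "4 * (P * Q) \<le> (P+Q)*(P+Q)" by (smt (verit) mult_mono zero_le_square power2_eq_square
          left_diff_distrib right_diff_distrib)
    moreover have "(P+Q)*(P+Q) < a * a" using \<open>P > 0\<close> \<open>Q > 0\<close> \<open>P + Q < a\<close>
      by (simp add: mult_strict_mono)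
    ultimately show False using \<open>P * Q = 3 + a*a\<close> a by (smt (verit) mult_pos_pos)
  qed
  define P where "P = q - a"
  define Q where "Q = r - a"
  have PQ: "P > 0" "Q > 0" "P * Q = 3 + a*a" using pos e by (auto simp: P_def Q_def)
  have "P + Q > 2 * a"
  proof (rule ccontr)
    assume "\<not> P + Q > 2*a"
    then have le: "P + Q \<le> 2*a" by simp
    have "(P+Q)*(P+Q) \<le> (2*a)*(2*a)"
      by (rule mult_mono[OF le le]) (use PQ a in auto)
    moreover have "4 * (P * Q) \<le> (P+Q)*(P+Q)"
    proof -
      have "0 \<le> (P - Q)*(P-Q)" by simp
      then show ?thesis by (simp add: algebra_simps)
    qed
    ultimately show False using PQ(3) by simp
  qed
  then show ?thesis using a by (simp add: P_def Q_def a_def)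
qed


lemma isoB_mm: "isoB M \<Longrightarrow> isoB N \<Longrightarrow> isoB (mm M N)"
  unfolding isoB_def app_mm by metis
lemma isoB_I3: "isoB I3" by (simp add: isoB_def)
lemma isoB_Rm: "isoB (Rm i)"
  unfolding isoB_def Rm_def R0_def R1_def R2_def
  by (auto simp: algebra_simps)
lemma isoB_Rw: "isoB (Rw ws)"
  by (induction ws) (simp_all add: isoB_I3 isoB_mm isoB_Rm)

lemma Bf_t: "Bf (a,b,c) (a,b,c) = - ((b+c-a)*(a+c-b) + (a+c-b)*(a+b-c) + (b+c-a)*(a+b-(c::int)))"
  by (simp add: algebra_simps)

lemma step_pos:
  assumes "Bf v v = -3" "s3 v > 0"
  shows "s3 (app (Rm i) v) > 0"
proof -
  obtain a b c where v: "v = (a,b,c)" by (cases v)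
  define t0 where "t0 = b+c-a"
  define t1 where "t1 = a+c-b"
  define t2 where "t2 = a+b-c"
  have B: "t0*t1 + t1*t2 + t0*t2 = 3" using assms(1) unfolding v Bf_t t0_def t1_def t2_def by simp
  have S: "t0 + t1 + t2 > 0" using assms(2) by (simp add: v t0_def t1_def t2_def)
  consider "i mod 3 = 0" | "i mod 3 = 1" | "i mod 3 \<noteq> 0 \<and> i mod 3 \<noteq> 1" by blast
  then show ?thesis
  proof cases
    case 1
    have "s3 (app (Rm i) v) = 3*t0 + t1 + t2" by (simp add: 1 Rm_def app_R0 v t0_def t1_def t2_def)
    moreover have "3*t0 + t1 + t2 > 0"
    proof (cases "t0 < 0")
      case True then show ?thesis using core[of t0 t1 t2] B S by simp
    qed (use S in simp)
    ultimately show ?thesis by simp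
  next
    case 2
    have "s3 (app (Rm i) v) = 3*t1 + t0 + t2" by (simp add: 2 Rm_def app_R1 v t0_def t1_def t2_def)
    moreover have "3*t1 + t0 + t2 > 0"
    proof (cases "t1 < 0")
      case True then show ?thesis using core[of t1 t0 t2] B S by (simp add: algebra_simps)
    qed (use S in simp)
    ultimately show ?thesis by simp
  next
    case 3
    have "s3 (app (Rm i) v) = 3*t2 + t0 + t1" using 3 by (simp add: Rm_def app_R2 v t0_def t1_def t2_def)
    moreover have "3*t2 + t0 + t1 > 0"
    proof (cases "t2 < 0")
      case True then show ?thesis using core[of t2 t0 t1] B S by (simp add: algebra_simps)
    qed (use S in simp)
    ultimately show ?thesis by simp
  qed
qed

lemma Rw_pos:
  assumes "Bf v v = -3" "s3 v > 0"
  shows "s3 (app (Rw ws) v) > 0 \<and> Bf (app (Rw ws) v) (app (Rw ws) v) = -3"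
proof (induction ws)
  case Nil then show ?case using assms by simp
next
  case (Cons i ws)
  then show ?case using step_pos[of "app (Rw ws) v" i] isoB_F[OF isoB_Rm[of i], of "app (Rw ws) v" "app (Rw ws) v"]
    by (simp add: app_mm del: Bf.simps)
qed

lemma chamber:
  fixes a b c :: int
  assumes "Bf (a,b,c) (a,b,c) = -3" "b+c-a \<ge> 0" "a+c-b \<ge> 0" "a+b-c \<ge> 0"
  shows "(a,b,c) = (1,1,1)"
proof -
  define t0 where "t0 = b+c-a"
  define t1 where "t1 = a+c-b"
  define t2 where "t2 = a+b-c"
  have B: "t0*t1 + t1*t2 + t0*t2 = 3" using assms(1) unfolding Bf_t t0_def t1_def t2_def by simp
  have nn: "t0 \<ge> 0" "t1 \<ge> 0" "t2 \<ge> 0" using assms by (auto simp: t0_def t1_def t2_def)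
  have par: "even (t0 - t1)" "even (t1 - t2)" "even (t0 - t2)"
    unfolding t0_def t1_def t2_def by presburger+
  have nz: "t0 \<noteq> 0" "t1 \<noteq> 0" "t2 \<noteq> 0"
  proof -
    have X: "False" if "x = 0" "even (x - y)" "even (x - z)" "x*y + y*z + x*z = (3::int)" for x y z
    proof -
      have "even y" "even z" using that by simp_all
      then obtain y' z' where "y = 2*y'" "z = 2*z'" by (metis evenE)
      then have "4*(y'*z') = 3" using that by (simp add: algebra_simps)
      then show False by presburger
    qed
    show "t0 \<noteq> 0" using X[of t0 t1 t2] B par by auto
    show "t1 \<noteq> 0" using X[of t1 t0 t2] B par by (auto simp: algebra_simps dvd_diff_commute)
    show "t2 \<noteq> 0" using X[of t2 t0 t1] B par by (auto simp: algebra_simps dvd_diff_commute)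
  qed
  have ge: "t0 \<ge> 1" "t1 \<ge> 1" "t2 \<ge> 1" using nn nz by auto
  have p: "x*y \<ge> x" "x*y \<ge> 1" if "x \<ge> 1" "y \<ge> (1::int)" for x y
    using that by (metis mult.right_neutral mult_left_mono order.trans zero_le_one)+
  have "t0*t1 = 1" "t1*t2 = 1" "t0*t2 = 1" using p[OF ge(1) ge(2)] p[OF ge(2) ge(3)] p[OF ge(1) ge(3)] B by linarith+
  then have "t0 = 1" "t1 = 1" "t2 = 1" using p[OF ge(1) ge(2)] p[OF ge(2) ge(3)] p[OF ge(2) ge(1)] ge
    by (simp_all add: mult.commute)
  then show ?thesis by (simp add: t0_def t1_def t2_def)
qed

lemma descent:
  "Bf v v = -3 \<Longrightarrow> s3 v > 0 \<Longrightarrow> \<exists>ws. app (Rw ws) v = (1,1,1)"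
proof (induction "nat (s3 v)" arbitrary: v rule: less_induct)
  case less
  obtain a b c where v: "v = (a,b,c)" by (cases v)
  have red: "\<exists>ws. app (Rw ws) v = (1,1,1)" if lt: "s3 (app (Rm i) v) < s3 v" for i
  proof -
    have pos: "s3 (app (Rm i) v) > 0" using step_pos less.prems by blast
    moreover have bf:  "Bf (app (Rm i) v) (app (Rm i) v) = -3" using isoB_F[OF isoB_Rm[of i], of v v] less.prems
      by (simp del: Bf.simps)
    have "nat (s3 (app (Rm i) v)) < nat (s3 v)" using lt pos by simp
    from less.hyps[OF this bf pos] obtain ws where "app (Rw ws) (app (Rm i) v) = (1,1,1)" by blast
    then have "app (Rw (ws @ [i])) v = (1,1,1)" by (simp add: Rw_append app_mm)
    then show ?thesis by blast
  qed
  show ?case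
  proof (cases "b+c-a < 0")
    case True
    have "s3 (app (Rm 0) v) < s3 v" using True by (simp add: v Rm_def app_R0)
    then show ?thesis by (rule red)
  next
    case F0: False
    show ?thesis
    proof (cases "a+c-b < 0")
      case True
      have "s3 (app (Rm 1) v) < s3 v" using True by (simp add: v Rm_def app_R1)
      then show ?thesis by (rule red)
    next
      case F1: False
      show ?thesis
      proof (cases "a+b-c < 0")
        case True
        have "s3 (app (Rm 2) v) < s3 v" using True by (simp add: v Rm_def app_R2)
        then show ?thesis by (rule red)
      next
        case False
        then have "v = (1,1,1)" using chamber[of a b c] less.prems F0 F1 v by simp
        then have "app (Rw []) v = (1,1,1)" by simp
        then show ?thesis by blast
      qed
    qed
  qed
qed


lemma sq_bound: "(x::int)*x \<le> 2 \<Longrightarrow> -1 \<le> x \<and> x \<le> 1"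
proof (rule ccontr)
  assume a: "x*x \<le> 2" "\<not> (-1 \<le> x \<and> x \<le> 1)"
  then consider "x \<ge> 2" | "-x \<ge> 2" by linarith
  then have "x*x \<ge> 4"
  proof cases
    case 1 then have "x*x \<ge> 2*2" using mult_mono[OF 1 1] by simp
    then show ?thesis by simp
  next
    case 2 then have "(-x)*(-x) \<ge> 2*2" using mult_mono[OF 2 2] by simp
    then show ?thesis by simp
  qed
  then show False using a by simp
qed

lemma roots:
  assumes "Bf v v = (1::int)" "Bf v (1,1,1) = -1"
  shows "v = (1,0,0) \<or> v = (0,1,0) \<or> v = (0,0,1)"
proof -
  obtain a b c where v: "v = (a,b,c)" by (cases v)
  have s: "c = 1 - a - b" using assms(2) by (simp add: v algebra_simps)
  have e: "a*a + a*b + b*b = a + b" using assms(1) unfolding v s by (simp add: algebra_simps)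
  have "(a-1)*(a-1) + (b-1)*(b-1) + (a+b)*(a+b) = 2" using e by (simp add: algebra_simps)
  then have "(a-1)*(a-1) \<le> 2" "(b-1)*(b-1) \<le> 2" by (smt (verit) zero_le_square)+
  then have "a \<in> {0,1,2}" "b \<in> {0,1,2}" using sq_bound by fastforce+
  then show ?thesis using e unfolding v s by auto
qed

fun cg2 :: "int \<times> int \<times> int \<Rightarrow> int \<times> int \<times> int \<Rightarrow> bool" where
  "cg2 (a,b,c) (a',b',c') = (even (a - a') \<and> even (b - b') \<and> even (c - c'))"

lemma cg2_Rm: "cg2 w v \<Longrightarrow> cg2 (app (Rm i) w) v"
  by (cases w; cases v) (auto simp: Rm_def R0_def R1_def R2_def; presburger)

lemma cg2_Rw: "cg2 (app (Rw ws) v) v"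
proof (induction ws)
  case Nil then show ?case by (cases v) simp
next
  case (Cons i ws) then show ?case by (simp add: app_mm cg2_Rm)
qed

fun alloddv :: "int \<times> int \<times> int \<Rightarrow> bool" where
  "alloddv (a,b,c) = (odd a \<and> odd b \<and> odd c)"

lemma odd_Rm: "alloddv v \<Longrightarrow> alloddv (app (Rm i) v) \<and> s3 (app (Rm i) v) mod 4 = (s3 v + 2) mod 4"
  by (cases v) (auto simp: Rm_def R0_def R1_def R2_def; presburger)

lemma Rw_rho: "alloddv (app (Rw ws) (1,1,1)) \<and> s3 (app (Rw ws) (1,1,1)) mod 4 = (3 + 2 * int (length ws)) mod 4"
proof (induction ws)
  case Nil then show ?case by simp
next
  case (Cons i ws)
  define w where "w = app (Rw ws) (1,1,1::int)"
  define n where "n = int (length ws)"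
  have IH: "alloddv w" "s3 w mod 4 = (3 + 2*n) mod 4" using Cons by (simp_all add: w_def n_def)
  have st: "alloddv (app (Rm i) w)" "s3 (app (Rm i) w) mod 4 = (s3 w + 2) mod 4" using odd_Rm[OF IH(1)] by auto
  have "(s3 w + 2) mod 4 = ((3 + 2*n) + 2) mod 4" by (metis IH(2) mod_add_left_eq)
  then have "s3 (app (Rm i) w) mod 4 = (3 + 2 * (n+1)) mod 4" using st(2) by (simp add: algebra_simps)
  then show ?case using st(1) by (simp add: app_mm w_def n_def)
qed

definition un :: "nat \<Rightarrow> int \<times> int \<times> int" where
  "un i = (if i = 0 then (1,0,0) else if i = 1 then (0,1,0) else (0,0,1))"

fun mcols :: "int \<times> int \<times> int \<Rightarrow> int \<times> int \<times> int \<Rightarrow> int \<times> int \<times> int \<Rightarrow> m3" where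
  "mcols (a,b,c) (d,e,f) (g,h,i) = M3 a d g b e h c f i"

lemma m3_cols: "M = mcols (app M (1,0,0)) (app M (0,1,0)) (app M (0,0,1))"
  by (cases M) simp

definition Pm :: "nat \<Rightarrow> nat \<Rightarrow> m3" where
  "Pm k u = mcols (un (k mod 3)) (un ((u + k) mod 3)) (un ((2*u + k) mod 3))"

definition scal :: "int \<Rightarrow> m3" where "scal e = M3 e 0 0 0 e 0 0 0 e"

lemma app_scal: "app (scal e) (a,b,c) = (e*a, e*b, (e::int)*c)" by (simp add: scal_def)
lemma isoB_scal: "e = 1 \<or> e = -1 \<Longrightarrow> isoB (scal e)"
  by (auto simp: isoB_def scal_def)
lemma scal_sq: "e = 1 \<or> e = -1 \<Longrightarrow> mm (scal e) (scal e) = I3"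
  by (auto simp: scal_def I3_def)
lemma scal_comm: "mm (scal e) M = mm M (scal e)"
  by (cases M) (simp add: scal_def algebra_simps)
lemma scal_mult: "mm (scal e) (scal e') = scal (e*e')"
  by (simp add: scal_def)
lemma scal_1: "scal 1 = I3" by (simp add: scal_def I3_def)

lemma Rm_sq: "mm (Rm i) (Rm i) = I3"
  by (simp add: Rm_def R0_def R1_def R2_def I3_def)
lemma Rw_rev: "mm (Rw (rev ws)) (Rw ws) = I3"
proof (induction ws)
  case Nil then show ?case by simp
next
  case (Cons i ws)
  have "mm (Rw (rev (i # ws))) (Rw (i # ws)) = mm (Rw (rev ws)) (mm (mm (Rm i) (Rm i)) (Rw ws))"
    by (simp add: Rw_append mm_assoc)
  also have "\<dots> = I3" using Cons by (simp add: Rm_sq)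
  finally show ?case .
qed

lemma perm_cases:
  assumes "c0 \<in> {(1,0,0),(0,1,0),(0,0,1)}" "c1 \<in> {(1,0,0),(0,1,0),(0,0,1)}" "c2 \<in> {(1,0,0),(0,1,0),(0,0,1)}"
    "c0 \<noteq> c1" "c1 \<noteq> c2" "c0 \<noteq> c2"
  shows "mcols c0 c1 c2 \<in> {Pm 0 1, Pm 1 1, Pm 2 1, Pm 0 2, Pm 1 2, Pm 2 2}"
  using assms by (auto simp: Pm_def un_def)

lemma decomp:
  assumes "isoB M"
  shows "\<exists>e ws k u. (e = 1 \<or> e = -1) \<and> k < 3 \<and> (u = 1 \<or> u = 2) \<and> M = mm (scal e) (mm (Rw ws) (Pm k u))"
proof -
  define v where "v = (app M (1,1,1) :: int \<times> int \<times> int)"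
  have bv: "Bf v v = -3" using isoB_F[OF assms, of "(1,1,1)" "(1,1,1)"] by (simp add: v_def)
  have nz: "s3 v \<noteq> 0"
  proof
    assume z: "s3 v = 0"
    obtain a b c where vv: "v = (a,b,c)" by (cases v)
    define Y where "Y = a*b+b*c+c*a"
    have X: "Bf v v = s3 v * s3 v - 4*Y" by (simp add: vv Y_def algebra_simps)
    have "4*Y = 3" using X z bv by simp
    then show False by presburger
  qed
  define e :: int where "e = (if s3 v > 0 then 1 else -1)"
  have e: "e = 1 \<or> e = -1" by (simp add: e_def)
  define v' where "v' = app (scal e) v"
  have "Bf v' v' = -3" using isoB_F[OF isoB_scal[OF e], of v v] bv by (simp add: v'_def del: Bf.simps)
  moreover have "s3 v' > 0" using nz by (cases v) (auto simp: v'_def app_scal e_def)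
  ultimately obtain ws where ws: "app (Rw ws) v' = (1,1,1)" using descent by blast
  define N where "N = mm (Rw ws) (mm (scal e) M)"
  have isoN: "isoB N" unfolding N_def by (intro isoB_mm isoB_Rw isoB_scal e assms)
  have Nr: "app N (1,1,1) = ((1,1,1) :: int \<times> int \<times> int)"
    using ws by (simp add: N_def app_mm v'_def v_def del: app.simps)
  have col: "app N c \<in> {(1,0,0),(0,1,0),(0,0,1)}" if "c \<in> {(1,0,0),(0,1,0),(0,0,1)}" for c :: "int \<times> int \<times> int"
  proof -
    have "Bf (app N c) (app N c) = Bf c c" by (rule isoB_F[OF isoN])
    moreover have "Bf (app N c) (app N (1,1,1)) = Bf c (1,1,1)" by (rule isoB_F[OF isoN])
    ultimately show ?thesis using roots[of "app N c"] that Nr by auto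
  qed
  have dif: "app N c \<noteq> app N d" if "c \<in> {(1,0,0),(0,1,0),(0,0,1)}" "d \<in> {(1,0,0),(0,1,0),(0,0,1)}" "c \<noteq> d"
    for c d :: "int \<times> int \<times> int"
  proof
    assume eq: "app N c = app N d"
    have "Bf (app N c) (app N d) = Bf c d" by (rule isoB_F[OF isoN])
    moreover have "Bf (app N c) (app N c) = Bf c c" by (rule isoB_F[OF isoN])
    ultimately show False using eq that by auto
  qed
  have "N \<in> {Pm 0 1, Pm 1 1, Pm 2 1, Pm 0 2, Pm 1 2, Pm 2 2}"
    apply (subst m3_cols)
    apply (rule perm_cases)
    by (intro col dif; simp)+
  then have "\<exists>k u. k < 3 \<and> (u = 1 \<or> u = 2) \<and> N = Pm k u"
    by (elim insertE emptyE) (rule exI, rule exI, rule conjI[rotated], rule conjI[rotated], assumption, simp, simp)+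
  then obtain k u where ku: "k < 3" "u = 1 \<or> u = 2" "N = Pm k u" by blast
  have "mm (scal e) (mm (Rw (rev ws)) N) = mm (scal e) (mm (mm (Rw (rev ws)) (Rw ws)) (mm (scal e) M))"
    by (simp add: N_def mm_assoc)
  also have "\<dots> = M" by (simp add: Rw_rev mm_assoc[symmetric] scal_sq[OF e])
  finally show ?thesis using e ku by blast
qed


fun idx :: "int \<times> int \<times> int \<Rightarrow> nat" where
  "idx (a,b,c) = (if odd a then 0 else if odd b then 1 else 2)"

definition ssum :: "m3 \<Rightarrow> int" where "ssum M = s3 (app M (1,1,1))"

definition chi :: "m3 \<Rightarrow> int \<times> int \<times> bool" where
  "chi M = (if ssum M mod 4 = 1 then 1 else 0,
     (3 * (if ssum M < 0 then 1 else 0) + 2 * int (idx (app M (1,0,0)))) mod 6,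
     (idx (app M (0,1,0)) + 3 - idx (app M (1,0,0))) mod 3 = 2)"

definition chi_nf :: "int \<Rightarrow> nat \<Rightarrow> nat \<Rightarrow> nat \<Rightarrow> int \<times> int \<times> bool" where
  "chi_nf e n k u = (if odd n \<noteq> (e = -1) then 1 else 0,
     (3 * (if e = -1 then 1 else 0) + 2 * int k) mod 6, u = 2)"

definition nf :: "int \<Rightarrow> nat list \<Rightarrow> nat \<Rightarrow> nat \<Rightarrow> m3" where
  "nf e ws k u = mm (scal e) (mm (Rw ws) (Pm k u))"

lemma k3: "k < (3::nat) \<Longrightarrow> k = 0 \<or> k = 1 \<or> k = 2" by auto

lemma Pm_rho: "k < 3 \<Longrightarrow> u = 1 \<or> u = 2 \<Longrightarrow> app (Pm k u) (1,1,1) = ((1,1,1) :: int \<times> int \<times> int)"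
  by (drule k3) (elim disjE; simp add: Pm_def un_def)

lemma app_mcols: "app (mcols c0 c1 c2) (1,0,0) = (c0 :: int \<times> int \<times> int)"
  "app (mcols c0 c1 c2) (0,1,0) = (c1 :: int \<times> int \<times> int)"
  by (cases c0; cases c1; cases c2; simp)+

lemma cg2_trans: "cg2 u v \<Longrightarrow> cg2 v w \<Longrightarrow> cg2 u w"
  by (cases u; cases v; cases w) (auto; presburger)

lemma cg2_scal: "e = 1 \<or> e = -1 \<Longrightarrow> cg2 (app (scal e) w) w"
  by (cases w) (auto simp: app_scal; presburger)

lemma idx_cg2: "cg2 w (un k) \<Longrightarrow> k < 3 \<Longrightarrow> idx w = k"
  by (cases w, drule k3) (auto simp: un_def; presburger)

lemma s3_scal: "s3 (app (scal e) w) = e * s3 w"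
  by (cases w) (simp add: app_scal algebra_simps)

lemma mod4_lemma:
  fixes \<sigma> n :: int
  assumes "\<sigma> mod 4 = (3 + 2*n) mod 4" "e = 1 \<or> e = -1"
  shows "((e*\<sigma>) mod 4 = 1) \<longleftrightarrow> (odd n \<noteq> (e = -1))"
  using assms by (auto; presburger)

lemma chi_nf_eq:
  assumes e: "e = 1 \<or> e = -1" and k: "k < 3" and u: "u = 1 \<or> u = 2"
  shows "chi (nf e ws k u) = chi_nf e (length ws) k u"
proof -
  define \<sigma> where "\<sigma> = s3 (app (Rw ws) (1,1,1))"
  have pos: "\<sigma> > 0" using Rw_pos[of "(1,1,1)" ws] by (simp add: \<sigma>_def)
  have m4: "\<sigma> mod 4 = (3 + 2 * int (length ws)) mod 4" using Rw_rho[of ws] by (simp add: \<sigma>_def)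
  have ss: "ssum (nf e ws k u) = e * \<sigma>"
    by (simp add: ssum_def nf_def app_mm Pm_rho[OF k u] s3_scal \<sigma>_def del: app.simps s3.simps)
  have neg: "(e * \<sigma> < 0) \<longleftrightarrow> e = -1" using e pos by auto
  have q: "(e*\<sigma>) mod 4 = 1 \<longleftrightarrow> (odd (length ws) \<noteq> (e = -1))"
    using mod4_lemma[OF m4 e] by simp
  have c0: "app (Pm k u) (1,0,0) = un k" using k by (simp add: Pm_def app_mcols)
  have c1: "app (Pm k u) (0,1,0) = un ((u + k) mod 3)" by (simp add: Pm_def app_mcols)
  have i0: "idx (app (nf e ws k u) (1,0,0)) = k"
    unfolding nf_def app_mm c0
    by (rule idx_cg2[OF cg2_trans[OF cg2_scal[OF e] cg2_Rw] k])
  have i1: "idx (app (nf e ws k u) (0,1,0)) = (u + k) mod 3"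
    unfolding nf_def app_mm c1
    by (rule idx_cg2[OF cg2_trans[OF cg2_scal[OF e] cg2_Rw]]) simp
  have uu: "(((u + k) mod 3) + 3 - k) mod 3 = 2 \<longleftrightarrow> u = 2" using k3[OF k] u by auto
  show ?thesis unfolding chi_def chi_nf_def ss i0 i1 using neg q uu by simp
qed


lemma Rm_mod: "Rm (i mod 3) = Rm i" by (simp add: Rm_def)

lemma Pm_R3: "k < 3 \<Longrightarrow> u = 1 \<or> u = 2 \<Longrightarrow> i < 3 \<Longrightarrow> mm (Pm k u) (Rm i) = mm (Rm ((u*i+k) mod 3)) (Pm k u)"
  by (drule k3, drule k3[of i]) (elim disjE; simp add: Pm_def un_def Rm_def R0_def R1_def R2_def)

lemma Pm_R: assumes "k < 3" "u = 1 \<or> u = 2" shows "mm (Pm k u) (Rm i) = mm (Rm ((u*i+k) mod 3)) (Pm k u)"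
proof -
  have "(u*i+k) mod 3 = (u*(i mod 3) + k) mod 3" by (metis mod_add_left_eq mod_mult_right_eq)
  then show ?thesis using Pm_R3[OF assms, of "i mod 3"] by (simp add: Rm_mod)
qed

lemma Pm_Rw: assumes "k < 3" "u = 1 \<or> u = 2"
  shows "mm (Pm k u) (Rw ws) = mm (Rw (map (\<lambda>i. (u*i+k) mod 3) ws)) (Pm k u)"
proof (induction ws)
  case Nil then show ?case by simp
next
  case (Cons i ws)
  have "mm (Pm k u) (Rw (i # ws)) = mm (mm (Pm k u) (Rm i)) (Rw ws)" by (simp add: mm_assoc)
  also have "\<dots> = mm (Rm ((u*i+k) mod 3)) (mm (Pm k u) (Rw ws))" by (simp add: Pm_R[OF assms] mm_assoc)
  also have "\<dots> = mm (Rw (map (\<lambda>i. (u*i+k) mod 3) (i # ws))) (Pm k u)" by (simp add: Cons mm_assoc)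
  finally show ?case .
qed

lemma Pm_mm: "k < 3 \<Longrightarrow> u = 1 \<or> u = 2 \<Longrightarrow> k' < 3 \<Longrightarrow> u' = 1 \<or> u' = 2 \<Longrightarrow>
   mm (Pm k u) (Pm k' u') = Pm ((k + u*k') mod 3) ((u*u') mod 3)"
  by (drule k3, drule k3[of k']) (elim disjE; simp add: Pm_def un_def)

lemma scal_swap: "mm A (mm (scal e) X) = mm (scal e) (mm A X)"
  by (metis mm_assoc scal_comm)

lemma nf_mult:
  assumes "k1 < 3" "u1 = 1 \<or> u1 = 2" "k2 < 3" "u2 = 1 \<or> u2 = 2"
  shows "mm (nf e1 ws1 k1 u1) (nf e2 ws2 k2 u2) =
    nf (e1*e2) (ws1 @ map (\<lambda>i. (u1*i+k1) mod 3) ws2) ((k1 + u1*k2) mod 3) ((u1*u2) mod 3)"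
proof -
  have "mm (nf e1 ws1 k1 u1) (nf e2 ws2 k2 u2) =
      mm (scal e1) (mm (Rw ws1) (mm (Pm k1 u1) (mm (scal e2) (mm (Rw ws2) (Pm k2 u2)))))"
    by (simp add: nf_def mm_assoc)
  also have "\<dots> = mm (mm (scal e1) (scal e2)) (mm (Rw ws1) (mm (mm (Pm k1 u1) (Rw ws2)) (Pm k2 u2)))"
    by (simp only: scal_swap[of "Pm k1 u1"] scal_swap[of "Rw ws1"] mm_assoc)
  also have "\<dots> = mm (scal (e1*e2)) (mm (Rw ws1) (mm (Rw (map (\<lambda>i. (u1*i+k1) mod 3) ws2)) (mm (Pm k1 u1) (Pm k2 u2))))"
    by (simp add: scal_mult Pm_Rw[OF assms(1,2)] mm_assoc)
  also have "\<dots> = nf (e1*e2) (ws1 @ map (\<lambda>i. (u1*i+k1) mod 3) ws2) ((k1 + u1*k2) mod 3) ((u1*u2) mod 3)"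
    by (simp add: nf_def Pm_mm[OF assms] Rw_append mm_assoc)
  finally show ?thesis .
qed

fun tmul :: "int \<times> int \<times> bool \<Rightarrow> int \<times> int \<times> bool \<Rightarrow> int \<times> int \<times> bool" where
  "tmul (z1,a1,s1) (z2,a2,s2) = ((z1+z2) mod 2, (a1 + (if s1 then -a2 else a2)) mod 6, s1 \<noteq> s2)"

lemma chi_nf_mult:
  assumes "e1 = 1 \<or> e1 = -1" "e2 = 1 \<or> e2 = -1" "k1 < 3" "u1 = 1 \<or> u1 = 2" "k2 < 3" "u2 = 1 \<or> u2 = 2"
  shows "chi_nf (e1*e2) (n1+n2) ((k1 + u1*k2) mod 3) ((u1*u2) mod 3) = tmul (chi_nf e1 n1 k1 u1) (chi_nf e2 n2 k2 u2)"
proof -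
  have A: "(if odd (n1+n2) \<noteq> (e1*e2 = -1) then 1 else 0) =
    ((if odd n1 \<noteq> (e1 = -1) then 1 else 0) + (if odd n2 \<noteq> (e2 = -1) then 1 else (0::int))) mod 2"
    using assms(1,2) by (cases "odd n1"; cases "odd n2"; auto)
  have B: "(3 * (if e1*e2 = -1 then 1 else 0) + 2 * int ((k1 + u1*k2) mod 3)) mod 6 =
     ((3 * (if e1 = -1 then 1 else 0) + 2 * int k1) mod 6 + (if u1 = 2 then - ((3 * (if e2 = -1 then 1 else 0) + 2 * int k2) mod 6)
       else (3 * (if e2 = -1 then 1 else 0) + 2 * int k2) mod 6)) mod 6"
    using assms(1,2) k3[OF assms(3)] k3[OF assms(5)] assms(4) by (elim disjE; simp)
  have C: "((u1*u2) mod 3 = 2) = ((u1 = 2) \<noteq> (u2 = 2))" using assms(4,6) by (elim disjE; simp)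
  show ?thesis unfolding chi_nf_def tmul.simps prod.inject using A B C by (intro conjI)
qed


lemma chi_mult:
  assumes "isoB M" "isoB N"
  shows "chi (mm M N) = tmul (chi M) (chi N)"
proof -
  obtain e1 ws1 k1 u1 where 1: "e1 = 1 \<or> e1 = -1" "k1 < 3" "u1 = 1 \<or> u1 = 2" "M = nf e1 ws1 k1 u1"
    using decomp[OF assms(1)] unfolding nf_def by blast
  obtain e2 ws2 k2 u2 where 2: "e2 = 1 \<or> e2 = -1" "k2 < 3" "u2 = 1 \<or> u2 = 2" "N = nf e2 ws2 k2 u2"
    using decomp[OF assms(2)] unfolding nf_def by blast
  have e: "e1*e2 = 1 \<or> e1*e2 = -1" using 1 2 by auto
  have u: "(u1*u2) mod 3 = 1 \<or> (u1*u2) mod 3 = 2" using 1(3) 2(3) by (elim disjE; simp)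
  have k: "(k1 + u1*k2) mod 3 < 3" by simp
  show ?thesis
    unfolding 1(4) 2(4) nf_mult[OF 1(2,3) 2(2,3)] chi_nf_eq[OF e k u] chi_nf_eq[OF 1(1-3)] chi_nf_eq[OF 2(1-3)]
    using chi_nf_mult[OF 1(1) 2(1) 1(2,3) 2(2,3)] by simp
qed

lemma Pm_01: "Pm 0 1 = I3" "Pm 0 (Suc 0) = I3" by (simp_all add: Pm_def un_def I3_def)

lemma chi_Rw: "chi (Rw ws) = (if odd (length ws) then 1 else 0, 0, False)"
proof -
  have "Rw ws = nf 1 ws 0 1" by (simp add: nf_def scal_1 Pm_01)
  then show ?thesis using chi_nf_eq[of 1 0 1 ws] by (simp add: chi_nf_def)
qed

lemma chi_nf_carrier: "chi_nf e n k u \<in> {0..<2} \<times> ({0..<6} \<times> UNIV)"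
  by (simp add: chi_nf_def)

lemma chi_carrier: "isoB M \<Longrightarrow> chi M \<in> {0..<2} \<times> ({0..<6} \<times> UNIV)"
  using decomp[of M] chi_nf_eq chi_nf_carrier unfolding nf_def[symmetric] by metis

lemma chi_nf_surj:
  assumes "t \<in> {0..<2} \<times> ({0..<6} \<times> (UNIV :: bool set))"
  shows "\<exists>e n k u. (e = 1 \<or> e = -1) \<and> k < 3 \<and> (u = 1 \<or> u = 2) \<and> chi_nf e n k u = t"
proof -
  obtain z a s where t: "t = (z,a,s)" by (cases t)
  have z: "z = 0 \<or> z = 1" and a: "a = 0 \<or> a = 1 \<or> a = 2 \<or> a = 3 \<or> a = 4 \<or> a = 5" using assms t by auto
  define e :: int where "e = (if odd a then -1 else 1)"
  define k :: nat where "k = (if a = 0 \<or> a = 3 then 0 else if a = 2 \<or> a = 5 then 1 else 2)"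
  define n :: nat where "n = (if (z = 1) \<noteq> (e = -1) then 1 else 0)"
  define u :: nat where "u = (if s then 2 else 1)"
  have "chi_nf e n k u = t" unfolding t chi_nf_def e_def k_def n_def u_def
    using z a by (elim disjE; simp)
  moreover have "(e = 1 \<or> e = -1) \<and> k < 3 \<and> (u = 1 \<or> u = 2)" by (simp add: e_def k_def u_def)
  ultimately show ?thesis by blast
qed

lemma isoB_Pm: "k < 3 \<Longrightarrow> u = 1 \<or> u = 2 \<Longrightarrow> isoB (Pm k u)"
  unfolding isoB_def
  by (drule k3) (elim disjE; auto simp: Pm_def un_def algebra_simps)

definition inv3 :: "m3 \<Rightarrow> bool" where "inv3 M \<longleftrightarrow> (\<exists>N. mm M N = I3 \<and> mm N M = I3)"

lemma inv3_mm: "inv3 M \<Longrightarrow> inv3 N \<Longrightarrow> inv3 (mm M N)"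
  unfolding inv3_def
proof (elim exE conjE)
  fix M' N' assume "mm M M' = I3" "mm M' M = I3" "mm N N' = I3" "mm N' N = I3"
  then have "mm (mm M N) (mm N' M') = I3 \<and> mm (mm N' M') (mm M N) = I3"
    by (metis mm_assoc mm_I3(1))
  then show "\<exists>X. mm (mm M N) X = I3 \<and> mm X (mm M N) = I3" by blast
qed

lemma inv3_scal: "e = 1 \<or> e = -1 \<Longrightarrow> inv3 (scal e)"
  unfolding inv3_def using scal_sq by blast

lemma inv3_Rw: "inv3 (Rw ws)"
  unfolding inv3_def using Rw_rev[of ws] Rw_rev[of "rev ws"] by auto

lemma inv3_Pm: assumes "k < 3" "u = 1 \<or> u = 2" shows "inv3 (Pm k u)"
proof -
  define k' where "k' = (if u = 1 then (3 - k) mod 3 else k)"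
  have k': "k' < 3" by (simp add: k'_def assms(1))
  have "mm (Pm k u) (Pm k' u) = I3" "mm (Pm k' u) (Pm k u) = I3"
    using assms k3[OF assms(1)] unfolding Pm_mm[OF assms k' assms(2)] Pm_mm[OF k' assms(2) assms]
    by (auto simp: k'_def Pm_01)
  then show ?thesis unfolding inv3_def by blast
qed

lemma nf_good: "e = 1 \<or> e = -1 \<Longrightarrow> k < 3 \<Longrightarrow> u = 1 \<or> u = 2 \<Longrightarrow> isoB (nf e ws k u) \<and> inv3 (nf e ws k u)"
  unfolding nf_def by (intro conjI isoB_mm isoB_scal isoB_Rw isoB_Pm inv3_mm inv3_scal inv3_Rw inv3_Pm)


lemma lin_I3: "lin I3 = (restrict id sl2 :: 'a::field_char_0 mat2 \<Rightarrow> _)"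
  unfolding lin_def by (rule restrict_ext) (simp add: vec3_crd)

lemma app_mcols_gen: "app (mcols c0 c1 c2) (x,y,z) =
   add3 (add3 (scl3 x (oi3 c0)) (scl3 y (oi3 c1))) (scl3 z (oi3 c2))"
  by (cases c0; cases c1; cases c2) (simp add: algebra_simps)

lemma vec3_decomp: "vec3 (x,y,z) = smul x (vec3 (1,0,0)) + smul y (vec3 (0,1,0)) + smul z (vec3 (0,0,1::'a::comm_ring_1))"
  by (simp add: vec3_smul vec3_add)

lemma IsomZ_lin:
  fixes \<phi> :: "'a::field_char_0 mat2 \<Rightarrow> 'a mat2"
  assumes "\<phi> \<in> IsomZ"
  shows "\<exists>M. isoB M \<and> \<phi> = lin M"
proof -
  note p = IsomZ_D[OF assms]
  have L: "\<exists>c. \<phi> (vec3 (oi3 t)) = vec3 (oi3 c)" for t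
  proof -
    have "vec3 (oi3 t) \<in> (Lat :: 'a mat2 set)" by (simp add: Lat_vec3 del: oi3.simps)
    then have "\<phi> (vec3 (oi3 t)) \<in> Lat" using p(6) by blast
    then have "\<phi> (vec3 (oi3 t)) \<in> vec3 ` range oi3" by (simp only: Lat_vec3)
    then show ?thesis by blast
  qed
  obtain c0 where c0: "\<phi> (vec3 (1,0,0)) = vec3 (oi3 c0)" using L[of "(1,0,0)"] by auto
  obtain c1 where c1: "\<phi> (vec3 (0,1,0)) = vec3 (oi3 c1)" using L[of "(0,1,0)"] by auto
  obtain c2 where c2: "\<phi> (vec3 (0,0,1)) = vec3 (oi3 c2)" using L[of "(0,0,1)"] by auto
  define M where "M = mcols c0 c1 c2"
  have eq: "\<phi> A = lin M A" if A: "A \<in> sl2" for A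
  proof -
    obtain x y z where xyz: "crd A = (x,y,z)" by (cases "crd A")
    have Aeq: "A = vec3 (x,y,z)" using vec3_crd[OF A] xyz by simp
    define e0 where "e0 = (vec3 (1,0,0) :: 'a mat2)"
    define e1 where "e1 = (vec3 (0,1,0) :: 'a mat2)"
    define e2 where "e2 = (vec3 (0,0,1) :: 'a mat2)"
    have s: "e0 \<in> sl2" "e1 \<in> sl2" "e2 \<in> sl2" by (simp_all add: e0_def e1_def e2_def)
    have d: "A = smul x e0 + smul y e1 + smul z e2" using Aeq vec3_decomp[of x y z]
      by (simp add: e0_def e1_def e2_def)
    have "\<phi> A = \<phi> (smul x e0 + smul y e1) + \<phi> (smul z e2)"
      unfolding d by (rule p(3)) (simp_all add: s sl2_add sl2_smul)
    also have "\<phi> (smul x e0 + smul y e1) = \<phi> (smul x e0) + \<phi> (smul y e1)"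
      by (rule p(3)) (simp_all add: s sl2_smul)
    finally have "\<phi> A = smul x (\<phi> e0) + smul y (\<phi> e1) + smul z (\<phi> e2)"
      by (simp add: p(4) s)
    then have "\<phi> A = smul x (\<phi> (vec3 (1,0,0))) + smul y (\<phi> (vec3 (0,1,0))) + smul z (\<phi> (vec3 (0,0,1)))"
      by (simp add: e0_def e1_def e2_def)
    also have "\<dots> = vec3 (app M (x,y,z))"
      by (simp add: c0 c1 c2 M_def app_mcols_gen vec3_smul vec3_add del: oi3.simps)
    also have "\<dots> = lin M A" using A xyz by (simp add: lin_def)
    finally show ?thesis .
  qed
  have phiM: "\<phi> = lin M"
    by (rule extensionalityI[OF p(1)]) (simp_all add: lin_def eq)
  have "isoB M" unfolding isoB_def
  proof (intro allI)
    fix u v :: "int \<times> int \<times> int"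
    have "tform (\<phi> (vec3 (oi3 u))) (\<phi> (vec3 (oi3 v))) = tform (vec3 (oi3 u)) (vec3 (oi3 v))"
      by (rule p(5)) simp_all
    then have "2 * (of_int (Bf (app M u) (app M v)) :: 'a) = 2 * of_int (Bf u v)"
      by (simp add: phiM tform_vec3 app_oi3 Bf_oi3 del: oi3.simps Bf.simps)
    then show "Bf (app M u) (app M v) = Bf u v" by simp
  qed
  then show ?thesis using phiM by blast
qed

lemma lin_inj:
  assumes "(lin M :: 'a::field_char_0 mat2 \<Rightarrow> _) = lin N"
  shows "M = N"
proof -
  have c: "(app M e :: int \<times> int \<times> int) = app N e" for e
  proof -
    have "(lin M :: 'a mat2 \<Rightarrow> _) (vec3 (oi3 e)) = lin N (vec3 (oi3 e))" using assms by simp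
    then have "(oi3 (app M e) :: 'a \<times> 'a \<times> 'a) = oi3 (app N e)"
      by (simp add: app_oi3 vec3_inj del: oi3.simps)
    then show ?thesis using oi3_inj by blast
  qed
  show ?thesis by (subst m3_cols, subst (2) m3_cols) (simp add: c)
qed

definition Mat :: "('a::field_char_0 mat2 \<Rightarrow> 'a mat2) \<Rightarrow> m3" where
  "Mat \<phi> = (THE M. \<phi> = lin M)"

lemma Mat_lin: "Mat (lin M :: 'a::field_char_0 mat2 \<Rightarrow> _) = M"
  unfolding Mat_def by (rule the_equality) (auto dest: lin_inj)

lemma mult_lin: "lin M \<otimes>\<^bsub>Isom_group\<^esub> lin N = (lin (mm M N) :: 'a::field_char_0 mat2 \<Rightarrow> _)"
  by (simp add: Isom_group_def lin_comp)

lemma one_lin: "\<one>\<^bsub>Isom_group\<^esub> = (lin I3 :: 'a::field_char_0 mat2 \<Rightarrow> _)"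
  by (simp add: Isom_group_def lin_I3)

lemma carrier_Isom: "carrier Isom_group = IsomZ" by (simp add: Isom_group_def)

lemma mat2_diff: "mat2 a b c d - mat2 a' b' c' d' = mat2 (a-a') (b-b') (c-c') (d-d')"
  by (subst mat2_eq) simp

lemma reflU_lin: "reflU ex = (lin R0 :: 'a::field_char_0 mat2 \<Rightarrow> _)" "reflU ey = (lin R1 :: 'a mat2 \<Rightarrow> _)"
  "reflU ez = (lin R2 :: 'a mat2 \<Rightarrow> _)"
proof -
  have gen: "reflU (vec3 e) = (lin M :: 'a mat2 \<Rightarrow> _)"
    if "\<And>x y z. vec3 (x,y,z) - smul (tform (vec3 e) (vec3 (x,y,z))) (vec3 e) = (vec3 (app M (x,y,z)) :: 'a mat2)" for e M
    unfolding reflU_def lin_def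
  proof (rule restrict_ext)
    fix A :: "'a mat2" assume A: "A \<in> sl2"
    obtain x y z where xyz: "crd A = (x,y,z)" by (cases "crd A")
    have Aeq: "A = vec3 (x,y,z)" using vec3_crd[OF A] xyz by simp
    show "A - smul (tform (vec3 e) A) (vec3 e) = vec3 (app M (crd A))"
      using that[of x y z] Aeq xyz by simp
  qed
  show "reflU ex = (lin R0 :: 'a mat2 \<Rightarrow> _)" unfolding ex_vec3
    by (rule gen) (simp add: mat2_tform vec3_def mat2_smul mat2_diff R0_def mat2_eq_iff algebra_simps)
  show "reflU ey = (lin R1 :: 'a mat2 \<Rightarrow> _)" unfolding ex_vec3
    by (rule gen) (simp add: mat2_tform vec3_def mat2_smul mat2_diff R1_def mat2_eq_iff algebra_simps)
  show "reflU ez = (lin R2 :: 'a mat2 \<Rightarrow> _)" unfolding ex_vec3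
    by (rule gen) (simp add: mat2_tform vec3_def mat2_smul mat2_diff R2_def mat2_eq_iff algebra_simps)
qed

lemma refl_gens_eq: "h \<in> (refl_gens :: ('a::field_char_0 mat2 \<Rightarrow> _) set) \<longleftrightarrow> (\<exists>i. h = lin (Rm i))"
proof
  assume "h \<in> refl_gens"
  then have "h = lin (Rm 0) \<or> h = lin (Rm 1) \<or> h = lin (Rm 2)"
    by (auto simp: refl_gens_def reflU_lin Rm_def)
  then show "\<exists>i. h = lin (Rm i)" by blast
next
  assume "\<exists>i. h = lin (Rm i)"
  then obtain i where "h = lin (Rm i)" by blast
  then show "h \<in> refl_gens" by (auto simp: refl_gens_def reflU_lin Rm_def)
qed

lemma lin_in3: "isoB M \<Longrightarrow> inv3 M \<Longrightarrow> (lin M :: 'a::field_char_0 mat2 \<Rightarrow> _) \<in> IsomZ"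
  unfolding inv3_def using lin_in by blast

lemma inv3_Rm: "inv3 (Rm i)" unfolding inv3_def using Rm_sq by blast

lemma Rw_in: "(lin (Rw ws) :: 'a::field_char_0 mat2 \<Rightarrow> _) \<in> IsomZ"
  by (rule lin_in3[OF isoB_Rw inv3_Rw])

lemma Wgrp_Rw: "g \<in> (Wgrp :: ('a::field_char_0 mat2 \<Rightarrow> _) set) \<Longrightarrow> \<exists>is. g = lin (Rw is)"
  unfolding Wgrp_def
proof (induction rule: generate.induct)
  case one
  have "\<one>\<^bsub>Isom_group\<^esub> = (lin (Rw []) :: 'a mat2 \<Rightarrow> _)" by (simp add: one_lin)
  then show ?case by blast
next
  case (incl h)
  then obtain i where "h = lin (Rm i)" using refl_gens_eq by blast
  then have "h = lin (Rw [i])" by simp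
  then show ?case by blast
next
  case (inv h)
  then obtain i where h: "h = lin (Rm i)" using refl_gens_eq by blast
  have hc: "h \<in> carrier Isom_group" using h lin_in3[OF isoB_Rm inv3_Rm] carrier_Isom by metis
  have "h \<otimes>\<^bsub>Isom_group\<^esub> h = \<one>\<^bsub>Isom_group\<^esub>" by (simp add: h mult_lin one_lin Rm_sq)
  then have "inv\<^bsub>Isom_group\<^esub> h = h" using group.inv_equality[OF group_Isom] hc by blast
  then have "inv\<^bsub>Isom_group\<^esub> h = lin (Rw [i])" using h by simp
  then show ?case by blast
next
  case (eng h1 h2)
  then obtain a b where "h1 = lin (Rw a)" "h2 = lin (Rw b)" by blast
  then have "h1 \<otimes>\<^bsub>Isom_group\<^esub> h2 = lin (Rw (a @ b))" by (simp add: mult_lin Rw_append)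
  then show ?case by blast
qed

lemma Rw_Wgrp: "(lin (Rw is) :: 'a::field_char_0 mat2 \<Rightarrow> _) \<in> Wgrp"
  unfolding Wgrp_def
proof (induction "is")
  case Nil
  have "(lin (Rw []) :: 'a mat2 \<Rightarrow> _) = \<one>\<^bsub>Isom_group\<^esub>" by (simp add: one_lin)
  then show ?case using generate.one by metis
next
  case (Cons i "is")
  have "(lin (Rm i) :: 'a mat2 \<Rightarrow> _) \<in> refl_gens" using refl_gens_eq by blast
  then have "(lin (Rm i) :: 'a mat2 \<Rightarrow> _) \<otimes>\<^bsub>Isom_group\<^esub> lin (Rw is) \<in> generate Isom_group refl_gens"
    using Cons by (blast intro: generate.eng generate.incl)
  then show ?case by (simp add: mult_lin)
qed

lemma foldr_words:
  "set ws \<subseteq> (refl_gens :: ('a::field_char_0 mat2 \<Rightarrow> _) set) \<Longrightarrow>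
   \<exists>is. length is = length ws \<and> foldr (\<otimes>\<^bsub>Isom_group\<^esub>) ws \<one>\<^bsub>Isom_group\<^esub> = lin (Rw is)"
proof (induction ws)
  case Nil then show ?case by (simp add: one_lin)
next
  case (Cons h ws)
  then obtain "is" where "is": "length is = length ws" "foldr (\<otimes>\<^bsub>Isom_group\<^esub>) ws \<one>\<^bsub>Isom_group\<^esub> = lin (Rw is)"
    by auto
  obtain i where h: "h = lin (Rm i)" using Cons.prems refl_gens_eq by auto
  have "foldr (\<otimes>\<^bsub>Isom_group\<^esub>) (h # ws) \<one>\<^bsub>Isom_group\<^esub> = lin (Rw (i # is))"
    using "is" h by (simp add: mult_lin)
  then show ?case using "is" by (metis length_Cons)
qed

lemma word_of: "set (map (\<lambda>i. lin (Rm i)) is) \<subseteq> (refl_gens :: ('a::field_char_0 mat2 \<Rightarrow> _) set) \<and>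
   foldr (\<otimes>\<^bsub>Isom_group\<^esub>) (map (\<lambda>i. lin (Rm i)) is) \<one>\<^bsub>Isom_group\<^esub> = (lin (Rw is) :: 'a mat2 \<Rightarrow> _)"
  by (induction "is") (auto simp: one_lin mult_lin refl_gens_eq)

lemma chi_W:
  assumes "\<phi> \<in> (Wgrp :: ('a::field_char_0 mat2 \<Rightarrow> _) set)"
  shows "chi (Mat \<phi>) = (if odd (word_length Isom_group refl_gens \<phi>) then 1 else 0, 0, False)"
proof -
  obtain "is" where "is": "\<phi> = lin (Rw is)" using Wgrp_Rw[OF assms] by blast
  let ?P = "\<lambda>n. \<exists>ws. length ws = n \<and> set ws \<subseteq> (refl_gens :: ('a mat2 \<Rightarrow> _) set) \<and>
      foldr (\<otimes>\<^bsub>Isom_group\<^esub>) ws \<one>\<^bsub>Isom_group\<^esub> = \<phi>"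
  have w: "set (map (\<lambda>i. lin (Rm i)) is) \<subseteq> (refl_gens :: ('a mat2 \<Rightarrow> _) set) \<and>
   foldr (\<otimes>\<^bsub>Isom_group\<^esub>) (map (\<lambda>i. lin (Rm i)) is) \<one>\<^bsub>Isom_group\<^esub> = (lin (Rw is) :: 'a mat2 \<Rightarrow> _)"
    by (rule word_of)
  have "?P (length (map (\<lambda>i. lin (Rm i)) is))"
    by (rule exI[of _ "map (\<lambda>i. lin (Rm i)) is"]) (use w "is" in simp)
  then have "?P (LEAST n. ?P n)" by (rule LeastI)
  then obtain ws where ws: "length ws = word_length Isom_group refl_gens \<phi>" "set ws \<subseteq> refl_gens"
    "foldr (\<otimes>\<^bsub>Isom_group\<^esub>) ws \<one>\<^bsub>Isom_group\<^esub> = \<phi>"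
    unfolding word_length_def by blast
  obtain is' where is': "length is' = length ws" "foldr (\<otimes>\<^bsub>Isom_group\<^esub>) ws \<one>\<^bsub>Isom_group\<^esub> = lin (Rw is')"
    using foldr_words[OF ws(2)] by blast
  have "\<phi> = lin (Rw is')" using ws(3) is'(2) by simp
  then have "Mat \<phi> = Rw is'" by (simp add: Mat_lin)
  then show ?thesis using chi_Rw[of is'] ws(1) is'(1) by simp
qed


lemma group_D6: "group (dihedral_group 6)"
proof (rule groupI)
  fix x y assume "x \<in> carrier (dihedral_group 6)" "y \<in> carrier (dihedral_group 6)"
  then show "x \<otimes>\<^bsub>dihedral_group 6\<^esub> y \<in> carrier (dihedral_group 6)"
    by (cases x; cases y) (simp add: dihedral_group_def)
next
  show "\<one>\<^bsub>dihedral_group 6\<^esub> \<in> carrier (dihedral_group 6)" by (simp add: dihedral_group_def)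
next
  fix x y z assume "x \<in> carrier (dihedral_group 6)" "y \<in> carrier (dihedral_group 6)" "z \<in> carrier (dihedral_group 6)"
  obtain a s where x: "x = (a,s)" by (cases x)
  obtain b t where y: "y = (b,t)" by (cases y)
  obtain c w where z: "z = (c,w)" by (cases z)
  have "((a + (if s then - b else b)) mod 6 + (if s \<noteq> t then - c else c)) mod 6 =
        (a + (if s then - ((b + (if t then - c else c)) mod 6) else (b + (if t then - c else c)) mod 6)) mod (6::int)"
    by (cases s; cases t; simp add: mod_simps algebra_simps)
  then show "x \<otimes>\<^bsub>dihedral_group 6\<^esub> y \<otimes>\<^bsub>dihedral_group 6\<^esub> z =
        x \<otimes>\<^bsub>dihedral_group 6\<^esub> (y \<otimes>\<^bsub>dihedral_group 6\<^esub> z)"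
    by (simp add: dihedral_group_def x y z) blast
next
  fix x assume "x \<in> carrier (dihedral_group 6)"
  then show "\<one>\<^bsub>dihedral_group 6\<^esub> \<otimes>\<^bsub>dihedral_group 6\<^esub> x = x"
    by (cases x) (simp add: dihedral_group_def)
next
  fix x assume xc: "x \<in> carrier (dihedral_group 6)"
  obtain a s where x: "x = (a,s)" by (cases x)
  have a: "0 \<le> a" "a < 6" using xc x by (auto simp: dihedral_group_def)
  define y where "y = (if s then (a, True) else ((6 - a) mod 6, False))"
  have "y \<in> carrier (dihedral_group 6)" using a by (simp add: y_def dihedral_group_def)
  moreover have "y \<otimes>\<^bsub>dihedral_group 6\<^esub> x = \<one>\<^bsub>dihedral_group 6\<^esub>"
    using a by (simp add: y_def x dihedral_group_def mod_simps)
  ultimately show "\<exists>y\<in>carrier (dihedral_group 6). y \<otimes>\<^bsub>dihedral_group 6\<^esub> x = \<one>\<^bsub>dihedral_group 6\<^esub>"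
    by blast
qed

abbreviation TG :: "(int \<times> int \<times> bool) monoid" where
  "TG \<equiv> DirProd (integer_mod_group 2) (dihedral_group 6)"

lemma TG_carrier: "carrier TG = {0..<2} \<times> ({0..<6} \<times> UNIV)"
  by (simp add: carrier_integer_mod_group dihedral_group_def)

lemma TG_mult: "x \<otimes>\<^bsub>TG\<^esub> y = tmul x y"
  by (cases x; cases y) (simp add: dihedral_group_def)

lemma TG_one: "\<one>\<^bsub>TG\<^esub> = (0, 0, False)"
  by (simp add: dihedral_group_def)

lemma group_TG: "group TG"
  by (intro DirProd_group group_integer_mod_group group_D6)

definition chiG :: "('a::field_char_0 mat2 \<Rightarrow> 'a mat2) \<Rightarrow> int \<times> int \<times> bool" where
  "chiG \<phi> = chi (Mat \<phi>)"

lemma chiG_hom: "chiG \<in> hom (Isom_group :: ('a::field_char_0 mat2 \<Rightarrow> 'a mat2) monoid) TG"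
proof (rule homI)
  fix x :: "'a mat2 \<Rightarrow> 'a mat2" assume "x \<in> carrier Isom_group"
  then obtain M where "isoB M" "x = lin M" using IsomZ_lin carrier_Isom by metis
  then show "chiG x \<in> carrier TG" unfolding TG_carrier chiG_def by (simp add: Mat_lin chi_carrier)
next
  fix x y :: "'a mat2 \<Rightarrow> 'a mat2" assume "x \<in> carrier Isom_group" "y \<in> carrier Isom_group"
  then obtain M N where "isoB M" "x = lin M" "isoB N" "y = lin N" using IsomZ_lin carrier_Isom by metis
  then show "chiG (x \<otimes>\<^bsub>Isom_group\<^esub> y) = chiG x \<otimes>\<^bsub>TG\<^esub> chiG y"
    by (simp add: chiG_def Mat_lin mult_lin TG_mult chi_mult)
qed

lemma chiG_surj: "chiG ` carrier (Isom_group :: ('a::field_char_0 mat2 \<Rightarrow> 'a mat2) monoid) = carrier TG"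
proof
  show "chiG ` carrier (Isom_group :: ('a mat2 \<Rightarrow> 'a mat2) monoid) \<subseteq> carrier TG"
    using chiG_hom hom_carrier by blast
  show "carrier TG \<subseteq> chiG ` carrier (Isom_group :: ('a mat2 \<Rightarrow> 'a mat2) monoid)"
  proof
    fix t assume "t \<in> carrier TG"
    then obtain e n k u where g: "e = 1 \<or> e = -1" "k < 3" "u = 1 \<or> u = 2" "chi_nf e n k u = t"
      using chi_nf_surj TG_carrier by metis
    define \<phi> where "\<phi> = (lin (nf e (replicate n 0) k u) :: 'a mat2 \<Rightarrow> 'a mat2)"
    have "\<phi> \<in> carrier Isom_group" unfolding \<phi>_def carrier_Isom
      using nf_good[OF g(1-3), of "replicate n 0"] by (blast intro: lin_in3)
    moreover have "chiG \<phi> = t" using chi_nf_eq[OF g(1-3)] g(4) by (simp add: chiG_def \<phi>_def Mat_lin)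
    ultimately show "t \<in> chiG ` carrier (Isom_group :: ('a mat2 \<Rightarrow> 'a mat2) monoid)" by blast
  qed
qed

lemma chi_nf_one:
  assumes "e = 1 \<or> e = -1" "k < 3" "u = 1 \<or> u = 2" "chi_nf e n k u = (0,0,False)"
  shows "e = 1 \<and> k = 0 \<and> u = 1 \<and> even n"
  using assms k3[OF assms(2)] by (auto simp: chi_nf_def split: if_splits)

lemma kernel_eq: "kernel (Isom_group :: ('a::field_char_0 mat2 \<Rightarrow> 'a mat2) monoid) TG chiG = Wplus"
proof
  show "kernel (Isom_group :: ('a mat2 \<Rightarrow> 'a mat2) monoid) TG chiG \<subseteq> Wplus"
  proof
    fix \<phi> :: "'a mat2 \<Rightarrow> 'a mat2" assume "\<phi> \<in> kernel Isom_group TG chiG"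
    then have \<phi>: "\<phi> \<in> IsomZ" "chi (Mat \<phi>) = (0,0,False)"
      by (auto simp: kernel_def carrier_Isom chiG_def TG_one dihedral_group_def)
    obtain M where M: "isoB M" "\<phi> = lin M" using IsomZ_lin[OF \<phi>(1)] by blast
    obtain e ws k u where d: "e = 1 \<or> e = -1" "k < 3" "u = 1 \<or> u = 2" "M = nf e ws k u"
      using decomp[OF M(1)] unfolding nf_def by blast
    have "chi_nf e (length ws) k u = (0,0,False)" using \<phi>(2) M(2) d chi_nf_eq[OF d(1-3)] by (simp add: Mat_lin)
    then have "e = 1" "k = 0" "u = 1" using chi_nf_one[OF d(1-3)] by auto
    then have "M = Rw ws" using d(4) by (simp add: nf_def scal_1 Pm_01)
    then have W: "\<phi> \<in> Wgrp" using M(2) Rw_Wgrp by simp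
    then have "even (word_length Isom_group refl_gens \<phi>)" using chi_W[OF W] \<phi>(2)
      by (auto split: if_splits)
    then show "\<phi> \<in> Wplus" using W by (simp add: Wplus_def)
  qed
  show "Wplus \<subseteq> kernel (Isom_group :: ('a mat2 \<Rightarrow> 'a mat2) monoid) TG chiG"
  proof
    fix \<phi> :: "'a mat2 \<Rightarrow> 'a mat2" assume "\<phi> \<in> Wplus"
    then have W: "\<phi> \<in> Wgrp" and ev: "even (word_length Isom_group refl_gens \<phi>)" by (auto simp: Wplus_def)
    obtain "is" where "\<phi> = lin (Rw is)" using Wgrp_Rw[OF W] by blast
    then have "\<phi> \<in> IsomZ" using Rw_in by simp
    moreover have "chiG \<phi> = (0,0,False)" using chi_W[OF W] ev by (simp add: chiG_def)
    ultimately show "\<phi> \<in> kernel Isom_group TG chiG"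
      by (simp add: kernel_def carrier_Isom TG_one dihedral_group_def)
  qed
qed

theorem proposition7p9:
  shows "(Isom_group :: ('a::field_char_0 mat2 \<Rightarrow> 'a mat2) monoid) Mod Wplus
           \<cong> DirProd (integer_mod_group 2) (dihedral_group 6)"
proof -
  have gh: "group_hom (Isom_group :: ('a mat2 \<Rightarrow> 'a mat2) monoid) TG chiG"
    by (intro group_hom.intro group_hom_axioms.intro group_Isom group_TG chiG_hom)
  show ?thesis
    using group_hom.FactGroup_iso[OF gh chiG_surj] by (simp only: kernel_eq)
qed


end
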